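(* Let $n\ge 1$ and let $L\ge 1$ be an integer together with an injective labelling $\ell\mapsto(p_\ell,q_\ell)$ of $\{0,\dots,L-1\}$ by pairs with $0\le p_\ell,q_\ell\le n-1$. Consider the Hilbert space $\mathbb{C}^2\otimes\mathbb{C}^{L}\otimes(\mathbb{C}^2)^{\otimes n}$ with computational basis states $\ket{v}\ket{l}\ket{j}$, where $v\in\{0,1\}$ (validation qubit), $l\in\{0,\dots,L-1\}$ (selection register) and $j\in\{0,1\}^n$ (Fock register). Say that $(l,j)$ is valid if, writing $(p,q)=(p_l,q_l)$ and $j=j_0j_1\cdots j_{n-1}$, either $p\neq q$, $j_q=1$ and $j_p=0$; or $p=q$ and $j_q=1$. For valid $(l,j)$ let $c(j,l)\in\{0,1\}^n$ be the bit string obtained from $j$ by swapping its $p$-th and $q$-th bits. Suppose that for each $i\in\{0,\dots,L-1\}$ we are given a linear operator $U_i$ acting on computational basis states by \[ U_i\ket{v}\ket{l}\ket{j}=\begin{cases}\ket{0}\ket{l}\ket{c(j,l)} & \text{if } i=l,\ v=1 \text{ and } (l,j)\text{ is valid},\\ \ket{v}\ket{l}\ket{j} & \text{otherwise.}\end{cases} \] Define $O_C=U_0U_1\cdots U_{L-1}\,(X\otimes I)$, where $X$ is the Pauli NOT gate on the validation qubit (so $X$ is applied first). Then for all $l\in\{0,\dots,L-1\}$ and $j\in\{0,1\}^n$, \[ O_C\ket{0}\ket{l}\ket{j}=\begin{cases}\ket{0}\ket{l}\ket{c(j,l)} & \text{if } (l,j)\text{ is valid},\\ \ket{1}\ket{l}\ket{j}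 & \text{otherwise.}\end{cases} \]
   Context: Bit strings $j\in\{0,1\}^n$ label occupation-number (Fock) basis states of $n$ fermionic modes; the pair $(p_l,q_l)$ corresponds to the operator $a^\dagger_{p}a_{q}$ of a pairing Hamiltonian, and validity of $(l,j)$ means $a^\dagger_p a_q\ket{j}\neq 0$, in which case $a^\dagger_p a_q$ maps $\ket{j}$ to $\ket{c(j,l)}$. *)

theory Defs
  imports Main "HOL-Library.Complex_Order" Complex_Main
begin

text \<open>Computational basis states |v>|l>|j>: v is the validation qubit (False = 0, True = 1),
  l the selection register value, j the Fock register bit string (a list of n bits, j ! k = j_k).
  A state of the Hilbert space is its coefficient function on basis states.\<close>

type_synonym basis = "bool \<times> nat \<times> bool list"
type_synonym state = "basis \<Rightarrow> complex"

definition ket :: "basis \<Rightarrow> state" where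
  "ket b = (\<lambda>x. if x = b then 1 else 0)"

definition is_linear_op :: "(state \<Rightarrow> state) \<Rightarrow> bool" where
  "is_linear_op U \<longleftrightarrow>
     (\<forall>\<psi> \<phi>. U (\<lambda>x. \<psi> x + \<phi> x) = (\<lambda>x. U \<psi> x + U \<phi> x)) \<and>
     (\<forall>c \<psi>. U (\<lambda>x. c * \<psi> x) = (\<lambda>x. c * U \<psi> x))"

definition valid :: "nat \<times> nat \<Rightarrow> bool list \<Rightarrow> bool" where
  "valid pq j \<longleftrightarrow> (let p = fst pq; q = snd pq in
      (p \<noteq> q \<and> j ! q \<and> \<not> j ! p) \<or> (p = q \<and> j ! q))"

definition cswap :: "nat \<times> nat \<Rightarrow> bool list \<Rightarrow> bool list" where
  "cswap pq j = (let p = fst pq; q = snd pq in j[p := j ! q, q := j ! p])"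

definition Xop :: "state \<Rightarrow> state" where
  "Xop \<psi> = (\<lambda>(v, l, j). \<psi> (\<not> v, l, j))"

definition OC :: "nat \<Rightarrow> (nat \<Rightarrow> state \<Rightarrow> state) \<Rightarrow> state \<Rightarrow> state" where
  "OC L U = foldr (\<circ>) (map U [0..<L]) id \<circ> Xop"

end

theory Submission
  imports Defs
begin

lemma cswap_len: "length (cswap pq j) = length j"
  by (simp add: cswap_def Let_def)

lemma foldr_comp: "foldr (\<circ>) fs g = foldr (\<circ>) fs id \<circ> g"
  by (induction fs) auto

lemma comp_eta: "(\<circ>) = (\<lambda>f g x. f (g x))" by (auto simp: fun_eq_iff)

lemma fold_U:
  fixes U :: "nat \<Rightarrow> state \<Rightarrow> state"
  assumes H: "\<forall>i<L. \<forall>v l j. l < L \<longrightarrow> length j = n \<longrightarrow>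
           U i (ket (v, l, j)) =
             (if i = l \<and> v \<and> valid (pq l) j then ket (False, l, cswap (pq l) j)
              else ket (v, l, j))"
  shows "k \<le> L \<Longrightarrow> l < L \<Longrightarrow> length j = n \<Longrightarrow>
    foldr (\<circ>) (map U [0..<k]) id (ket (v, l, j)) =
      (if l < k \<and> v \<and> valid (pq l) j then ket (False, l, cswap (pq l) j) else ket (v, l, j))"
proof (induction k arbitrary: v j)
  case 0
  then show ?case by simp
next
  case (Suc k)
  have F: "foldr (\<circ>) (map U [0..<Suc k]) id = foldr (\<circ>) (map U [0..<k]) id \<circ> U k"
    by (simp add: foldr_append foldr_comp[of _ "U k"])
  have Uk: "U k (ket (v, l, j)) = (if k = l \<and> v \<and> valid (pq l) j then ket (False, l, cswap (pq l) j)
              else ket (v, l, j))"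
    using H Suc.prems by (auto simp: comp_eta id_def)
  have F2: "foldr (\<circ>) (map U [0..<Suc k]) id (ket (v, l, j)) = foldr (\<circ>) (map U [0..<k]) id (U k (ket (v, l, j)))"
    using F by (metis comp_apply)
  show ?case
  proof (cases "k = l \<and> v \<and> valid (pq l) j")
    case True
    have I: "foldr (\<circ>) (map U [0..<k]) id (ket (False, l, cswap (pq l) j)) = ket (False, l, cswap (pq l) j)"
      using Suc.IH[where v=False and j="cswap (pq l) j"] Suc.prems cswap_len by (simp add: comp_eta id_def)
    show ?thesis unfolding F2 Uk using True I by simp
  next
    case False
    then show ?thesis unfolding F2 Uk using Suc.IH[where v=v and j=j] Suc.prems by (auto simp: comp_eta id_def)
  qed
qed

lemma Xop_ket: "Xop (ket (False, l, j)) = ket (True, l, j)"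
  by (auto simp: Xop_def ket_def fun_eq_iff)

theorem theorem2:
  fixes n L :: nat
    and pq :: "nat \<Rightarrow> nat \<times> nat"
    and U :: "nat \<Rightarrow> state \<Rightarrow> state"
  assumes "n \<ge> 1" and "L \<ge> 1"
    and "inj_on pq {..<L}"
    and "\<forall>l<L. fst (pq l) < n \<and> snd (pq l) < n"
    and "\<forall>i<L. is_linear_op (U i)"
    and "\<forall>i<L. \<forall>v l j. l < L \<longrightarrow> length j = n \<longrightarrow>
           U i (ket (v, l, j)) =
             (if i = l \<and> v \<and> valid (pq l) j then ket (False, l, cswap (pq l) j)
              else ket (v, l, j))"
  shows "\<forall>l<L. \<forall>j. length j = n \<longrightarrow>
           OC L U (ket (False, l, j)) =
             (if valid (pq l) j then ket (False, l, cswap (pq l) j)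
              else ket (True, l, j))"
  using fold_U[OF assms(6), of L] by (simp add: OC_def Xop_ket)

end
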